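(* Let $\alpha,\beta\in(0,\pi/2)$ and consider the system on $S^2$ described in the context. There is no abnormal extremal pair $(x,\lambda)$ with $x(0)=N=(0,0,1)$ whose trajectory is bang-bang.
   Context: The system is $\dot x=Fx+u_1G_1x+u_2G_2x$ on the unit sphere $S^2\subset\mathbb R^3$, measurable controls $|u_i|\le1$, with $F=\cos\alpha\begin{pmatrix}0&-1&0\\1&0&0\\0&0&0\end{pmatrix}$, $G_1=\sin\alpha\sin\beta\begin{pmatrix}0&0&0\\0&0&-1\\0&1&0\end{pmatrix}$, $G_2=\sin\alpha\cos\beta\begin{pmatrix}0&0&-1\\0&0&0\\1&0&0\end{pmatrix}$. An extremal pair: trajectory $x$ with control $u$ on $[0,T]$, Lipschitz row vector $\lambda(t)\in\mathbb R^3$ with $\lambda(t)\cdot x(t)=0$, $\lambda(t)\ne0$, and constant $\lambda_0\le0$, such that a.e. $\dot\lambda=-\lambda(F+u_1G_1+u_2G_2)$, $u(t)$ maximizes $\lambda Fx+u_1\lambda G_1x+u_2\lambda G_2x+\lambda_0$ over $[-1,1]^2$, and the maximum is $0$. It is abnormal if $\lambda_0=0$. Bang-bang: $u$ is a finite concatenation of arcs on which it is a.e. constant in $\{-1,1\}^2$. *)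

theory Defs
  imports "HOL-Analysis.Analysis"
begin

text \<open>Vectors of R^3 are real^3; components indexed 1,2,3 (in the type 3, index 3 = 0).\<close>

definition vec3 :: "real \<Rightarrow> real \<Rightarrow> real \<Rightarrow> real^3" where
  "vec3 a b c = (\<chi> i. if i = 1 then a else if i = 2 then b else c)"

definition mat3 :: "real^3 \<Rightarrow> real^3 \<Rightarrow> real^3 \<Rightarrow> real^3^3" where
  "mat3 r1 r2 r3 = (\<chi> i. if i = 1 then r1 else if i = 2 then r2 else r3)"

definition Fm :: "real \<Rightarrow> real^3^3" where
  "Fm \<alpha> = cos \<alpha> *\<^sub>R mat3 (vec3 0 (-1) 0) (vec3 1 0 0) (vec3 0 0 0)"

definition G1m :: "real \<Rightarrow> real \<Rightarrow> real^3^3" where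
  "G1m \<alpha> \<beta> = (sin \<alpha> * sin \<beta>) *\<^sub>R mat3 (vec3 0 0 0) (vec3 0 0 (-1)) (vec3 0 1 0)"

definition G2m :: "real \<Rightarrow> real \<Rightarrow> real^3^3" where
  "G2m \<alpha> \<beta> = (sin \<alpha> * cos \<beta>) *\<^sub>R mat3 (vec3 0 0 (-1)) (vec3 0 0 0) (vec3 1 0 0)"

definition Am :: "real \<Rightarrow> real \<Rightarrow> real \<Rightarrow> real \<Rightarrow> real^3^3" where
  "Am \<alpha> \<beta> v1 v2 = Fm \<alpha> + v1 *\<^sub>R G1m \<alpha> \<beta> + v2 *\<^sub>R G2m \<alpha> \<beta>"

definition Ham :: "real \<Rightarrow> real \<Rightarrow> real^3 \<Rightarrow> real^3 \<Rightarrow> real \<Rightarrow> real \<Rightarrow> real \<Rightarrow> real" where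
  "Ham \<alpha> \<beta> l x l0 v1 v2 = l \<bullet> (Fm \<alpha> *v x) + v1 * (l \<bullet> (G1m \<alpha> \<beta> *v x))
      + v2 * (l \<bullet> (G2m \<alpha> \<beta> *v x)) + l0"

text \<open>Admissible trajectory on [0,T]: measurable controls with |u_i| \<le> 1, x on the unit sphere,
  and x a Caratheodory (absolutely continuous) solution of the ODE, expressed in integral form.\<close>
definition admissible :: "real \<Rightarrow> real \<Rightarrow> real \<Rightarrow> (real \<Rightarrow> real^3) \<Rightarrow> (real \<Rightarrow> real) \<Rightarrow> (real \<Rightarrow> real) \<Rightarrow> bool" where
  "admissible \<alpha> \<beta> T x u1 u2 \<longleftrightarrow>
     0 < T \<and>
     u1 \<in> borel_measurable (lebesgue_on {0..T}) \<and> u2 \<in> borel_measurable (lebesgue_on {0..T}) \<and>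
     (\<forall>t\<in>{0..T}. \<bar>u1 t\<bar> \<le> 1 \<and> \<bar>u2 t\<bar> \<le> 1) \<and>
     (\<forall>t\<in>{0..T}. norm (x t) = 1) \<and>
     (\<forall>t\<in>{0..T}. ((\<lambda>s. Am \<alpha> \<beta> (u1 s) (u2 s) *v x s) has_integral (x t - x 0)) {0..t})"

definition extremal :: "real \<Rightarrow> real \<Rightarrow> real \<Rightarrow> (real \<Rightarrow> real^3) \<Rightarrow> (real \<Rightarrow> real) \<Rightarrow> (real \<Rightarrow> real)
    \<Rightarrow> (real \<Rightarrow> real^3) \<Rightarrow> real \<Rightarrow> bool" where
  "extremal \<alpha> \<beta> T x u1 u2 l l0 \<longleftrightarrow>
     admissible \<alpha> \<beta> T x u1 u2 \<and>
     (\<exists>L. L-lipschitz_on {0..T} l) \<and>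
     (\<forall>t\<in>{0..T}. l t \<bullet> x t = 0 \<and> l t \<noteq> 0) \<and>
     l0 \<le> 0 \<and>
     (AE t in lebesgue_on {0..T}.
        (l has_vector_derivative (- (l t v* Am \<alpha> \<beta> (u1 t) (u2 t)))) (at t) \<and>
        (\<forall>v1\<in>{-1..1}. \<forall>v2\<in>{-1..1}.
            Ham \<alpha> \<beta> (l t) (x t) l0 v1 v2 \<le> Ham \<alpha> \<beta> (l t) (x t) l0 (u1 t) (u2 t)) \<and>
        Ham \<alpha> \<beta> (l t) (x t) l0 (u1 t) (u2 t) = 0)"

definition abnormal_extremal :: "real \<Rightarrow> real \<Rightarrow> real \<Rightarrow> (real \<Rightarrow> real^3) \<Rightarrow> (real \<Rightarrow> real) \<Rightarrow> (real \<Rightarrow> real)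
    \<Rightarrow> (real \<Rightarrow> real^3) \<Rightarrow> real \<Rightarrow> bool" where
  "abnormal_extremal \<alpha> \<beta> T x u1 u2 l l0 \<longleftrightarrow> extremal \<alpha> \<beta> T x u1 u2 l l0 \<and> l0 = 0"

definition bang_bang :: "real \<Rightarrow> (real \<Rightarrow> real) \<Rightarrow> (real \<Rightarrow> real) \<Rightarrow> bool" where
  "bang_bang T u1 u2 \<longleftrightarrow>
     (\<exists>k::nat. \<exists>\<tau>::nat \<Rightarrow> real. \<exists>c1 c2 :: nat \<Rightarrow> real.
        1 \<le> k \<and> \<tau> 0 = 0 \<and> \<tau> k = T \<and> (\<forall>i<k. \<tau> i < \<tau> (Suc i)) \<and>
        (\<forall>i<k. c1 i \<in> {-1, 1} \<and> c2 i \<in> {-1, 1} \<and>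
           (AE t in lebesgue. t \<in> {\<tau> i..\<tau> (Suc i)} \<longrightarrow> u1 t = c1 i \<and> u2 t = c2 i)))"

definition northpole :: "real^3" where "northpole = vec3 0 0 1"

end

theory Submission imports Defs begin

lemma vec3_nth[simp]: "vec3 a b c $ 1 = a" "vec3 a b c $ 2 = b" "vec3 a b c $ 3 = c"
  by (simp_all add: vec3_def)

lemma mat3_nth[simp]: "mat3 r1 r2 r3 $ 1 = r1" "mat3 r1 r2 r3 $ 2 = r2" "mat3 r1 r2 r3 $ 3 = r3"
  by (simp_all add: mat3_def)

lemma inner3: "(v::real^3) \<bullet> w = v$1*w$1 + v$2*w$2 + v$3*w$3"
  by (simp add: inner_vec_def sum_3)

lemma mv3: "((A::real^3^3) *v x) $ i = A$i$1 * x$1 + A$i$2 * x$2 + A$i$3 * x$3"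
  by (simp add: matrix_vector_mult_def sum_3)

lemma atN:
  fixes lv :: "real^3"
  assumes "lv \<bullet> northpole = 0" "lv \<noteq> 0" "0 < s1" "0 < s2"
    and "lv \<bullet> (Fm a *v northpole) + \<bar>lv \<bullet> (G1m a b *v northpole)\<bar> + \<bar>lv \<bullet> (G2m a b *v northpole)\<bar> \<le> 0"
    and "sin a * sin b = s1" "sin a * cos b = s2"
  shows False
proof -
  have e: "lv \<bullet> (Fm a *v northpole) = 0"
          "lv \<bullet> (G1m a b *v northpole) = - s1 * lv$2"
          "lv \<bullet> (G2m a b *v northpole) = - s2 * lv$1"
    using assms(6,7) by (simp_all add: inner3 mv3 Fm_def G1m_def G2m_def northpole_def)
  have c: "lv$3 = 0" using assms(1) by (simp add: inner3 northpole_def)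
  from assms(3,4,5) e have "s1 * \<bar>lv$2\<bar> + s2 * \<bar>lv$1\<bar> \<le> 0" by (simp add: abs_mult)
  moreover have "0 \<le> s1 * \<bar>lv$2\<bar>" "0 \<le> s2 * \<bar>lv$1\<bar>" using assms(3,4) by simp_all
  ultimately have "s1 * \<bar>lv$2\<bar> = 0" "s2 * \<bar>lv$1\<bar> = 0" by linarith+
  hence "lv$1 = 0" "lv$2 = 0" using assms(3,4) by simp_all
  with c have "lv = 0" by (simp add: vec_eq_iff forall_3)
  with assms(2) show False by simp
qed

lemma sgn_abs_mult: "sgn (a::real) * a = \<bar>a\<bar>"
  by (simp add: sgn_if)

lemma cont_ae_le0:
  fixes M :: "real \<Rightarrow> real"
  assumes T: "0 < T" and c: "continuous_on {0..T} M"
    and ae: "AE t in lebesgue_on {0..T}. M t \<le> 0"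
  shows "M 0 \<le> 0"
proof (rule ccontr)
  assume "\<not> M 0 \<le> 0"
  hence pos: "M 0 > 0" by simp
  have "0 \<in> {0..T}" using T by simp
  with c pos obtain d where d: "d > 0" "\<forall>t\<in>{0..T}. dist t 0 < d \<longrightarrow> dist (M t) (M 0) < M 0"
    unfolding continuous_on_iff by blast
  define e where "e = min (d/2) T"
  have e: "0 < e" "e \<le> T" "e < d" using d T by (auto simp: e_def)
  have sub: "{0..e} \<subseteq> {t\<in>space (lebesgue_on {0..T}). \<not> M t \<le> 0}"
  proof
    fix t assume t: "t \<in> {0..e}"
    hence "t \<in> {0..T}" "dist t 0 < d" using e by (auto simp: dist_real_def)
    with d have "dist (M t) (M 0) < M 0" by blast
    hence "M t > 0" by (simp add: dist_real_def)
    with \<open>t \<in> {0..T}\<close> show "t \<in> {t\<in>space (lebesgue_on {0..T}). \<not> M t \<le> 0}" by simp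
  qed
  obtain N where N: "{t\<in>space (lebesgue_on {0..T}). \<not> M t \<le> 0} \<subseteq> N"
    "emeasure (lebesgue_on {0..T}) N = 0" "N \<in> sets (lebesgue_on {0..T})"
    using AE_E[OF ae] by blast
  have "{0..e} \<in> sets (lebesgue_on {0..T})" using e
    by (simp add: sets_restrict_space_iff)
  hence "emeasure (lebesgue_on {0..T}) {0..e} \<le> emeasure (lebesgue_on {0..T}) N"
    using N sub by (intro emeasure_mono) auto
  also have "\<dots> = 0" using N(2) by simp
  finally have z: "emeasure (lebesgue_on {0..T}) {0..e} = 0" by simp
  have "emeasure (lebesgue_on {0..T}) {0..e} = emeasure lebesgue {0..e}"
    using e by (intro emeasure_restrict_space) auto
  also have "\<dots> = ennreal e" using e by simp
  finally show False using z e by simp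
qed

theorem proposition3:
  fixes \<alpha> \<beta> T :: real and x :: "real \<Rightarrow> real^3" and u1 u2 :: "real \<Rightarrow> real"
    and l :: "real \<Rightarrow> real^3" and l0 :: real
  assumes "0 < \<alpha>" "\<alpha> < pi/2" "0 < \<beta>" "\<beta> < pi/2"
  shows "\<not> (abnormal_extremal \<alpha> \<beta> T x u1 u2 l l0 \<and> x 0 = northpole \<and> bang_bang T u1 u2)"
proof
  assume H: "abnormal_extremal \<alpha> \<beta> T x u1 u2 l l0 \<and> x 0 = northpole \<and> bang_bang T u1 u2"
  hence ex: "extremal \<alpha> \<beta> T x u1 u2 l 0" and x0: "x 0 = northpole"
    by (auto simp: abnormal_extremal_def)
  have ex': "admissible \<alpha> \<beta> T x u1 u2 \<and> (\<exists>L. L-lipschitz_on {0..T} l) \<and>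
     (\<forall>t\<in>{0..T}. l t \<bullet> x t = 0 \<and> l t \<noteq> 0) \<and> (0::real) \<le> 0 \<and>
     (AE t in lebesgue_on {0..T}.
        (l has_vector_derivative (- (l t v* Am \<alpha> \<beta> (u1 t) (u2 t)))) (at t) \<and>
        (\<forall>v1\<in>{-1..1}. \<forall>v2\<in>{-1..1}.
            Ham \<alpha> \<beta> (l t) (x t) 0 v1 v2 \<le> Ham \<alpha> \<beta> (l t) (x t) 0 (u1 t) (u2 t)) \<and>
        Ham \<alpha> \<beta> (l t) (x t) 0 (u1 t) (u2 t) = 0)"
    using ex unfolding extremal_def .
  hence adm: "admissible \<alpha> \<beta> T x u1 u2" and lip: "\<exists>L. L-lipschitz_on {0..T} l"
    and lx: "\<forall>t\<in>{0..T}. l t \<bullet> x t = 0 \<and> l t \<noteq> 0"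
    and ae0: "AE t in lebesgue_on {0..T}.
        (l has_vector_derivative (- (l t v* Am \<alpha> \<beta> (u1 t) (u2 t)))) (at t) \<and>
        (\<forall>v1\<in>{-1..1}. \<forall>v2\<in>{-1..1}.
            Ham \<alpha> \<beta> (l t) (x t) 0 v1 v2 \<le> Ham \<alpha> \<beta> (l t) (x t) 0 (u1 t) (u2 t)) \<and>
        Ham \<alpha> \<beta> (l t) (x t) 0 (u1 t) (u2 t) = 0"
    by blast+
  have ae: "AE t in lebesgue_on {0..T}.
        (\<forall>v1\<in>{-1..1}. \<forall>v2\<in>{-1..1}.
            Ham \<alpha> \<beta> (l t) (x t) 0 v1 v2 \<le> Ham \<alpha> \<beta> (l t) (x t) 0 (u1 t) (u2 t)) \<and>
        Ham \<alpha> \<beta> (l t) (x t) 0 (u1 t) (u2 t) = 0"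
    using ae0 by (rule eventually_mono) (elim conjE, intro conjI)
  from adm have T: "0 < T" and
    int: "\<forall>t\<in>{0..T}. ((\<lambda>s. Am \<alpha> \<beta> (u1 s) (u2 s) *v x s) has_integral (x t - x 0)) {0..t}"
    unfolding admissible_def by auto
  define f where "f = (\<lambda>s. Am \<alpha> \<beta> (u1 s) (u2 s) *v x s)"
  have fi: "f integrable_on {0..T}" using int T unfolding f_def by auto
  have "continuous_on {0..T} (\<lambda>t. x 0 + integral {0..t} f)"
    by (intro continuous_intros indefinite_integral_continuous_1 fi)
  moreover have "\<And>t. t \<in> {0..T} \<Longrightarrow> x 0 + integral {0..t} f = x t"
  proof -
    fix t assume "t \<in> {0..T}"
    hence "integral {0..t} f = x t - x 0" using int unfolding f_def by (blast intro: integral_unique)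
    thus "x 0 + integral {0..t} f = x t" by simp
  qed
  ultimately have xc: "continuous_on {0..T} x" by (rule continuous_on_eq)
  have lc: "continuous_on {0..T} l" using lip by (auto intro: lipschitz_on_continuous_on)
  define M where "M = (\<lambda>t. l t \<bullet> (Fm \<alpha> *v x t) + \<bar>l t \<bullet> (G1m \<alpha> \<beta> *v x t)\<bar>
      + \<bar>l t \<bullet> (G2m \<alpha> \<beta> *v x t)\<bar>)"
  have mc: "continuous_on {0..T} (\<lambda>t. A *v x t)" for A :: "real^3^3"
    by (rule continuous_on_compose2[OF matrix_vector_mult_linear_continuous_on[of UNIV A] xc]) simp
  have Mc: "continuous_on {0..T} M" unfolding M_def
    by (intro continuous_on_add continuous_on_rabs continuous_on_inner lc mc)
  have Mae: "AE t in lebesgue_on {0..T}. M t \<le> 0"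
    using ae
  proof (rule eventually_mono)
    fix t assume h: "(\<forall>v1\<in>{-1..1}. \<forall>v2\<in>{-1..1}.
            Ham \<alpha> \<beta> (l t) (x t) 0 v1 v2 \<le> Ham \<alpha> \<beta> (l t) (x t) 0 (u1 t) (u2 t)) \<and>
        Ham \<alpha> \<beta> (l t) (x t) 0 (u1 t) (u2 t) = 0"
    let ?v1 = "sgn (l t \<bullet> (G1m \<alpha> \<beta> *v x t))" and ?v2 = "sgn (l t \<bullet> (G2m \<alpha> \<beta> *v x t))"
    have "?v1 \<in> {-1..1}" "?v2 \<in> {-1..1}" by (auto simp: sgn_if)
    hence "Ham \<alpha> \<beta> (l t) (x t) 0 ?v1 ?v2 \<le> Ham \<alpha> \<beta> (l t) (x t) 0 (u1 t) (u2 t)"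
      using h[THEN conjunct1] by blast
    hence "Ham \<alpha> \<beta> (l t) (x t) 0 ?v1 ?v2 \<le> 0" using h[THEN conjunct2] by linarith
    thus "M t \<le> 0" unfolding M_def Ham_def by (simp only: sgn_abs_mult add_0_right)
  qed
  have "M 0 \<le> 0" by (rule cont_ae_le0[OF T Mc Mae])
  hence m0: "l 0 \<bullet> (Fm \<alpha> *v northpole) + \<bar>l 0 \<bullet> (G1m \<alpha> \<beta> *v northpole)\<bar>
      + \<bar>l 0 \<bullet> (G2m \<alpha> \<beta> *v northpole)\<bar> \<le> 0" unfolding M_def x0 .
  have h0: "l 0 \<bullet> x 0 = 0 \<and> l 0 \<noteq> 0" using lx T by simp
  hence n1: "l 0 \<bullet> northpole = 0" and n2: "l 0 \<noteq> 0" unfolding x0 by simp_all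
  have p1: "0 < sin \<alpha> * sin \<beta>" and p2: "0 < sin \<alpha> * cos \<beta>"
  proof -
    have "0 < sin \<alpha>" using assms(1,2) by (intro sin_gt_zero) simp_all
    moreover have "0 < sin \<beta>" using assms(3,4) by (intro sin_gt_zero) simp_all
    moreover have "0 < cos \<beta>" using assms(3,4) by (intro cos_gt_zero_pi) simp_all
    ultimately show "0 < sin \<alpha> * sin \<beta>" "0 < sin \<alpha> * cos \<beta>" by simp_all
  qed
  show False by (rule atN[OF n1 n2 p1 p2 m0 refl refl])
qed
end
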